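(* Let $n\ge2$, $A\in\mathbb{R}^{n\times m}$, $B\in\mathbb{R}^{m\times n}$, and let $C$ be a cycle in the DSR$^{[2]}$ graph $G^{[2]}_{A,B}$. (i) If $C$ is direct and $\pi(C)=\{W',W''\}$, then $P(C)=P(W')P(W'')$. (ii) If $C$ is twisted, then $P(C)=-P(\pi(C))$.
   Context: DSR graphs: for $A\in\mathbb{R}^{n\times m}$, $B\in\mathbb{R}^{m\times n}$, $G_{A,B}$ is the signed bipartite digraph with S-vertices $S_1,\dots,S_n$ and R-vertices $R_1,\dots,R_m$, an arc $R_j\to S_i$ of sign $\mathrm{sign}(A_{ij})$ iff $A_{ij}\ne0$, an arc $S_i\to R_j$ of sign $\mathrm{sign}(B_{ji})$ iff $B_{ji}\ne0$, with antiparallel arcs of equal sign merged into an undirected edge. Walks traverse edges consistently with orientation (empty walks allowed); the sign of a walk is the product of the signs of its edges with multiplicity (empty walk: $+1$); for a walk $W$ of even length, its parity is $P(W)=(-1)^{|W|/2}\mathrm{sign}(W)$, where $|W|$ is the number of edges with multiplicity. A cycle is a nonempty closed walk with no repeated vertex except first$=$last. DSR$^{[2]}$ graph: $\overline{\mathbf L}^A\in\mathbb{R}^{\binom n2\times mn}$ has rows indexed by $(i,j)$, $i<j$, columns by $(k,l)$, $1\le k\le m$, $1\le l\le n$, with entries $A_{jk}$ if $l=i$, $-A_{ik}$ if $l=j$, $0$ otherwise; $\underline{\mathbf L}^B\in\mathbb{R}^{mn\times\binom n2}$ has $(k,l),(i,j)$ entry $B_{kj}$ if $l=i$, $-B_{ki}$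 if $l=j$, $0$ otherwise. $G^{[2]}_{A,B}:=G_{\overline{\mathbf L}^A,\underline{\mathbf L}^B}$, with S-vertices written $ij=ji$ and R-vertices $k^l$; an edge $(ij,k^l)$ exists only if $l\in\{i,j\}$. The projection $\pi$ sends an edge $(ij,k^j)$ to the edge $(S_i,R_k)$ of $G_{A,B}$ (same direction). Direct/twisted and $\pi(C)$: let $C$ have S-vertex sequence $a_1b_1,\dots,a_{T+1}b_{T+1}=a_1b_1$, and write the segment from $a_rb_r$ to $a_{r+1}b_{r+1}$ as $(a_rb_r,k^l,a_{r+1}b_{r+1})$ with $l$ the common index; its projection is a length-2 walk from $S_x$ to $S_y$, where $x$ is the element of $\{a_r,b_r\}$ other than $l$ and $y$ that of $\{a_{r+1},b_{r+1}\}$ other than $l$. Starting from empty walks at $S_{a_1}$ and $S_{b_1}$, for $r=1,\dots,T$ append the projected segment to whichever current walk ends at $S_x$. If the final walks $W',W''$ are both closed, $C$ is direct and $\pi(C)=\{W',W''\}$; otherwise $W'$, $W''$ go from $S_{a_1}$ to $S_{b_1}$ and back respectively (or vice versa), $C$ is twisted, and $\pi(C)=W'\sqcup W''$ is the closed walk obtained by traversing them in succession. *)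

theory Defs
  imports Complex_Main
begin

datatype ('s, 'r) dsr_vertex = SV 's | RV 'r

text \<open>An undirected (merged) edge is the same as a pair of
  antiparallel arcs of equal sign, so walks are just vertex sequences following arcs.\<close>
fun dsr_arc :: "'s set \<Rightarrow> 'r set \<Rightarrow> ('s \<Rightarrow> 'r \<Rightarrow> real) \<Rightarrow> ('r \<Rightarrow> 's \<Rightarrow> real)
    \<Rightarrow> ('s, 'r) dsr_vertex \<Rightarrow> ('s, 'r) dsr_vertex \<Rightarrow> bool" where
  "dsr_arc SI RI A B (RV k) (SV i) = (i \<in> SI \<and> k \<in> RI \<and> A i k \<noteq> 0)"
| "dsr_arc SI RI A B (SV i) (RV k) = (i \<in> SI \<and> k \<in> RI \<and> B k i \<noteq> 0)"
| "dsr_arc SI RI A B _ _ = False"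

fun dsr_arc_sign :: "('s \<Rightarrow> 'r \<Rightarrow> real) \<Rightarrow> ('r \<Rightarrow> 's \<Rightarrow> real)
    \<Rightarrow> ('s, 'r) dsr_vertex \<Rightarrow> ('s, 'r) dsr_vertex \<Rightarrow> real" where
  "dsr_arc_sign A B (RV k) (SV i) = sgn (A i k)"
| "dsr_arc_sign A B (SV i) (RV k) = sgn (B k i)"
| "dsr_arc_sign A B _ _ = 1"

text \<open>A walk is a nonempty vertex list (a single vertex = the empty walk).\<close>
definition dsr_walk :: "'s set \<Rightarrow> 'r set \<Rightarrow> ('s \<Rightarrow> 'r \<Rightarrow> real) \<Rightarrow> ('r \<Rightarrow> 's \<Rightarrow> real)
    \<Rightarrow> ('s, 'r) dsr_vertex list \<Rightarrow> bool" where
  "dsr_walk SI RI A B vs \<longleftrightarrow> vs \<noteq> [] \<and>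
     (\<forall>t < length vs - 1. dsr_arc SI RI A B (vs ! t) (vs ! Suc t))"

definition walk_len :: "'v list \<Rightarrow> nat" where
  "walk_len vs = length vs - 1"

definition walk_sign :: "('s \<Rightarrow> 'r \<Rightarrow> real) \<Rightarrow> ('r \<Rightarrow> 's \<Rightarrow> real)
    \<Rightarrow> ('s, 'r) dsr_vertex list \<Rightarrow> real" where
  "walk_sign A B vs = (\<Prod>t < length vs - 1. dsr_arc_sign A B (vs ! t) (vs ! Suc t))"

definition walk_parity :: "('s \<Rightarrow> 'r \<Rightarrow> real) \<Rightarrow> ('r \<Rightarrow> 's \<Rightarrow> real)
    \<Rightarrow> ('s, 'r) dsr_vertex list \<Rightarrow> real" where
  "walk_parity A B vs = (-1) ^ (walk_len vs div 2) * walk_sign A B vs"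

definition dsr_cycle :: "'s set \<Rightarrow> 'r set \<Rightarrow> ('s \<Rightarrow> 'r \<Rightarrow> real) \<Rightarrow> ('r \<Rightarrow> 's \<Rightarrow> real)
    \<Rightarrow> ('s, 'r) dsr_vertex list \<Rightarrow> bool" where
  "dsr_cycle SI RI A B vs \<longleftrightarrow> dsr_walk SI RI A B vs \<and> walk_len vs \<ge> 1 \<and>
     hd vs = last vs \<and> distinct (tl vs)"

text \<open>Indices are 1-based. S-vertices of G^[2]: pairs (i,j) with 1 \<le> i < j \<le> n
  (the vertex ij = ji); R-vertices: pairs (k,l) = k^l with 1 \<le> k \<le> m, 1 \<le> l \<le> n.\<close>
definition SI2 :: "nat \<Rightarrow> (nat \<times> nat) set" where
  "SI2 n = {(i, j). 1 \<le> i \<and> i < j \<and> j \<le> n}"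

definition RI2 :: "nat \<Rightarrow> nat \<Rightarrow> (nat \<times> nat) set" where
  "RI2 n m = {(k, l). 1 \<le> k \<and> k \<le> m \<and> 1 \<le> l \<and> l \<le> n}"

definition Lbar :: "(nat \<Rightarrow> nat \<Rightarrow> real) \<Rightarrow> nat \<times> nat \<Rightarrow> nat \<times> nat \<Rightarrow> real" where
  "Lbar A ij kl = (case ij of (i, j) \<Rightarrow> case kl of (k, l) \<Rightarrow>
     if l = i then A j k else if l = j then - A i k else 0)"

definition Lunder :: "(nat \<Rightarrow> nat \<Rightarrow> real) \<Rightarrow> nat \<times> nat \<Rightarrow> nat \<times> nat \<Rightarrow> real" where
  "Lunder B kl ij = (case kl of (k, l) \<Rightarrow> case ij of (i, j) \<Rightarrow>
     if l = i then B k j else if l = j then - B k i else 0)"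

definition other :: "nat \<times> nat \<Rightarrow> nat \<Rightarrow> nat" where
  "other p l = (if l = fst p then snd p else fst p)"

fun segments :: "('s, 'r) dsr_vertex list \<Rightarrow> ('s \<times> 'r \<times> 's) list" where
  "segments (SV p # RV q # SV p' # rest) = (p, q, p') # segments (SV p' # rest)"
| "segments _ = []"

definition proj_step :: "(nat, nat) dsr_vertex list \<times> (nat, nat) dsr_vertex list
    \<Rightarrow> (nat \<times> nat) \<times> (nat \<times> nat) \<times> (nat \<times> nat)
    \<Rightarrow> (nat, nat) dsr_vertex list \<times> (nat, nat) dsr_vertex list" where
  "proj_step W seg = (case W of (W1, W2) \<Rightarrow> case seg of (p, (k, l), p') \<Rightarrow>
     (let x = other p l; y = other p' l in
       if last W1 = SV x then (W1 @ [RV k, SV y], W2) else (W1, W2 @ [RV k, SV y])))"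

definition proj_walks :: "nat \<Rightarrow> nat \<Rightarrow> (nat \<times> nat, nat \<times> nat) dsr_vertex list
    \<Rightarrow> (nat, nat) dsr_vertex list \<times> (nat, nat) dsr_vertex list" where
  "proj_walks a1 b1 C = foldl proj_step ([SV a1], [SV b1]) (segments C)"

definition is_direct :: "nat \<Rightarrow> nat \<Rightarrow> (nat \<times> nat, nat \<times> nat) dsr_vertex list \<Rightarrow> bool" where
  "is_direct a1 b1 C = (case proj_walks a1 b1 C of (W1, W2) \<Rightarrow>
     hd W1 = last W1 \<and> hd W2 = last W2)"

definition proj_twisted :: "nat \<Rightarrow> nat \<Rightarrow> (nat \<times> nat, nat \<times> nat) dsr_vertex list
    \<Rightarrow> (nat, nat) dsr_vertex list" where
  "proj_twisted a1 b1 C = (case proj_walks a1 b1 C of (W1, W2) \<Rightarrow> W1 @ tl W2)"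

end

theory Submission
  imports Defs
begin

lemma walk_Cons2: "dsr_walk SI RI A B (a # b # rest) = (dsr_arc SI RI A B a b \<and> dsr_walk SI RI A B (b # rest))"
  unfolding dsr_walk_def by (auto simp: less_Suc_eq_0_disj)

lemma sign_Cons2: "walk_sign A B (a # b # rest) = dsr_arc_sign A B a b * walk_sign A B (b # rest)"
  unfolding walk_sign_def by (simp only: length_Cons diff_Suc_1 prod.lessThan_Suc_shift) simp

lemma sign_single: "walk_sign A B [a] = 1"
  unfolding walk_sign_def by simp

lemma sign_app: "W \<noteq> [] \<Longrightarrow> V \<noteq> [] \<Longrightarrow> last W = hd V \<Longrightarrow>
   walk_sign A B (W @ tl V) = walk_sign A B W * walk_sign A B V"
proof (induction W rule: induct_list012)
  case (2 x) then show ?case by (cases V) (auto simp: sign_single)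
next
  case (3 x y zs)
  then show ?case by (simp add: sign_Cons2)
qed simp

lemma len_app: "W \<noteq> [] \<Longrightarrow> V \<noteq> [] \<Longrightarrow> walk_len (W @ tl V) = walk_len W + walk_len V"
  unfolding walk_len_def by (cases W; cases V) auto

lemma sign_app2: "W \<noteq> [] \<Longrightarrow> walk_sign A B (W @ [a, b]) = walk_sign A B W * dsr_arc_sign A B (last W) a * dsr_arc_sign A B a b"
  using sign_app[of W "[last W, a, b]" A B] by (simp add: sign_Cons2 sign_single)

lemma len_app2: "W \<noteq> [] \<Longrightarrow> walk_len (W @ [a, b]) = walk_len W + 2"
  unfolding walk_len_def by simp

lemma step:
  assumes "a < b" "c < d" "l = a \<or> l = b" "l = c \<or> l = d"
    "(last W1 = SV a \<and> last W2 = SV b) \<or> (last W1 = SV b \<and> last W2 = SV a)" "W1\<noteq>[]" "W2\<noteq>[]"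
    "proj_step (W1,W2) ((a,b),(k,l),(c,d)) = (W1',W2')"
  shows "W1' \<noteq> [] \<and> W2' \<noteq> [] \<and> hd W1' = hd W1 \<and> hd W2' = hd W2
    \<and> ((last W1' = SV c \<and> last W2' = SV d) \<or> (last W1' = SV d \<and> last W2' = SV c))
    \<and> walk_len W1' + walk_len W2' = walk_len W1 + walk_len W2 + 2
    \<and> (even (walk_len W1) \<longrightarrow> even (walk_len W1')) \<and> (even (walk_len W2) \<longrightarrow> even (walk_len W2'))
    \<and> walk_sign A B W1' * walk_sign A B W2' = walk_sign A B W1 * walk_sign A B W2
        * sgn (Lunder B (k,l) (a,b)) * sgn (Lbar A (c,d) (k,l))
        * (if (last W1' = SV c) = (last W1 = SV a) then 1 else -1)"
  using assms
  by (auto simp: proj_step_def other_def Lunder_def Lbar_def sign_app2 len_app2 sgn_mult Let_def split: if_splits)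

lemma decomp:
  assumes "dsr_walk SI RI A B C" "hd C = SV p" "last C = SV p'"
  shows "C = [SV p] \<or> (\<exists>q p'' C''. C = SV p # RV q # SV p'' # C'' \<and>
     dsr_arc SI RI A B (SV p) (RV q) \<and> dsr_arc SI RI A B (RV q) (SV p'') \<and>
     dsr_walk SI RI A B (SV p'' # C'') \<and> last (SV p'' # C'') = SV p')"
proof -
  obtain rest where C: "C = SV p # rest" using assms(1,2) unfolding dsr_walk_def by (cases C) auto
  show ?thesis
  proof (cases rest)
    case Nil then show ?thesis using C by simp
  next
    case (Cons y rest')
    have a1: "dsr_arc SI RI A B (SV p) y" "dsr_walk SI RI A B (y # rest')"
      using assms(1) C Cons walk_Cons2 by metis+
    then obtain q where y: "y = RV q" by (cases y) auto
    have "rest' \<noteq> []" using assms(3) C Cons y by auto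
    then obtain z rest'' where r: "rest' = z # rest''" by (cases rest') auto
    have a2: "dsr_arc SI RI A B (RV q) z" "dsr_walk SI RI A B (z # rest'')"
      using a1(2) y r walk_Cons2 by metis+
    then obtain p'' where z: "z = SV p''" by (cases z) auto
    show ?thesis using C Cons y r z a1 a2 assms(3) by auto
  qed
qed

lemma mainl:
  "dsr_walk (SI2 n) (RI2 n m) (Lbar A) (Lunder B) C \<Longrightarrow> hd C = SV p \<Longrightarrow> last C = SV p' \<Longrightarrow>
   (last W1 = SV (fst p) \<and> last W2 = SV (snd p)) \<or> (last W1 = SV (snd p) \<and> last W2 = SV (fst p)) \<Longrightarrow>
   W1 \<noteq> [] \<Longrightarrow> W2 \<noteq> [] \<Longrightarrow> even (walk_len W1) \<Longrightarrow> even (walk_len W2) \<Longrightarrow>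
   foldl proj_step (W1, W2) (segments C) = (V1, V2) \<Longrightarrow>
   V1 \<noteq> [] \<and> V2 \<noteq> [] \<and> hd V1 = hd W1 \<and> hd V2 = hd W2
    \<and> ((last V1 = SV (fst p') \<and> last V2 = SV (snd p')) \<or> (last V1 = SV (snd p') \<and> last V2 = SV (fst p')))
    \<and> walk_len V1 + walk_len V2 = walk_len W1 + walk_len W2 + walk_len C
    \<and> even (walk_len V1) \<and> even (walk_len V2) \<and> even (walk_len C)
    \<and> walk_sign A B V1 * walk_sign A B V2 = walk_sign A B W1 * walk_sign A B W2
        * walk_sign (Lbar A) (Lunder B) C
        * (if (last V1 = SV (fst p')) = (last W1 = SV (fst p)) then 1 else -1)"
proof (induction "length C" arbitrary: C p W1 W2 rule: less_induct)
  case less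
  from decomp[OF less.prems(1-3)] show ?case
  proof
    assume "C = [SV p]"
    then show ?thesis using less.prems by (auto simp: sign_single walk_len_def)
  next
    assume "\<exists>q p'' C''. C = SV p # RV q # SV p'' # C'' \<and>
     dsr_arc (SI2 n) (RI2 n m) (Lbar A) (Lunder B) (SV p) (RV q) \<and> dsr_arc (SI2 n) (RI2 n m) (Lbar A) (Lunder B) (RV q) (SV p'') \<and>
     dsr_walk (SI2 n) (RI2 n m) (Lbar A) (Lunder B) (SV p'' # C'') \<and> last (SV p'' # C'') = SV p'"
    then obtain q p'' C'' where C: "C = SV p # RV q # SV p'' # C''"
      and ar1: "dsr_arc (SI2 n) (RI2 n m) (Lbar A) (Lunder B) (SV p) (RV q)"
      and ar2: "dsr_arc (SI2 n) (RI2 n m) (Lbar A) (Lunder B) (RV q) (SV p'')"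
      and w: "dsr_walk (SI2 n) (RI2 n m) (Lbar A) (Lunder B) (SV p'' # C'')"
      and l: "last (SV p'' # C'') = SV p'" by blast
    obtain a b where p: "p = (a,b)" by (cases p)
    obtain c d where p'': "p'' = (c,d)" by (cases p'')
    obtain k l where q: "q = (k,l)" by (cases q)
    have ab: "a < b" "l = a \<or> l = b" using ar1 p q by (auto simp: SI2_def Lunder_def split: if_splits)
    have cd: "c < d" "l = c \<or> l = d" using ar2 p'' q by (auto simp: SI2_def Lbar_def split: if_splits)
    obtain W1' W2' where ps: "proj_step (W1,W2) ((a,b),(k,l),(c,d)) = (W1',W2')" by fastforce
    note st = step[OF ab(1) cd(1) ab(2) cd(2) _ less.prems(5,6) ps, of A B]
    have st': "W1' \<noteq> [] \<and> W2' \<noteq> [] \<and> hd W1' = hd W1 \<and> hd W2' = hd W2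
    \<and> ((last W1' = SV c \<and> last W2' = SV d) \<or> (last W1' = SV d \<and> last W2' = SV c))
    \<and> walk_len W1' + walk_len W2' = walk_len W1 + walk_len W2 + 2
    \<and> (even (walk_len W1) \<longrightarrow> even (walk_len W1')) \<and> (even (walk_len W2) \<longrightarrow> even (walk_len W2'))
    \<and> walk_sign A B W1' * walk_sign A B W2' = walk_sign A B W1 * walk_sign A B W2
        * sgn (Lunder B (k,l) (a,b)) * sgn (Lbar A (c,d) (k,l))
        * (if (last W1' = SV c) = (last W1 = SV a) then 1 else -1)"
      using st less.prems(4) p by auto
    have fo: "foldl proj_step (W1', W2') (segments (SV p'' # C'')) = (V1, V2)"
      using less.prems(9) C p q p'' ps by (cases C'') auto
    have IH: "V1 \<noteq> [] \<and> V2 \<noteq> [] \<and> hd V1 = hd W1' \<and> hd V2 = hd W2'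
    \<and> ((last V1 = SV (fst p') \<and> last V2 = SV (snd p')) \<or> (last V1 = SV (snd p') \<and> last V2 = SV (fst p')))
    \<and> walk_len V1 + walk_len V2 = walk_len W1' + walk_len W2' + walk_len (SV p'' # C'')
    \<and> even (walk_len V1) \<and> even (walk_len V2) \<and> even (walk_len (SV p'' # C''))
    \<and> walk_sign A B V1 * walk_sign A B V2 = walk_sign A B W1' * walk_sign A B W2'
        * walk_sign (Lbar A) (Lunder B) (SV p'' # C'')
        * (if (last V1 = SV (fst p')) = (last W1' = SV (fst p'')) then 1 else -1)"
      apply (rule less.hyps[OF _ w _ l _ _ _ _ _ fo])
      using C st' p'' less.prems(7,8) by auto
    have sC: "walk_sign (Lbar A) (Lunder B) C = sgn (Lunder B (k,l) (a,b)) * sgn (Lbar A (c,d) (k,l))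
        * walk_sign (Lbar A) (Lunder B) (SV p'' # C'')"
      using C p q p'' by (simp add: sign_Cons2)
    have lC: "walk_len C = walk_len (SV p'' # C'') + 2" using C by (simp add: walk_len_def)
    show ?thesis
      using IH st' sC lC p p'' less.prems(7,8) by (auto simp: algebra_simps)
  qed
qed

lemma par_mult: "even a \<Longrightarrow> even b \<Longrightarrow> ((-1::real) ^ (a div 2)) * (-1) ^ (b div 2) = (-1) ^ ((a + b) div 2)"
  by (auto simp: power_add[symmetric] elim!: evenE)

theorem proposition5p3:
  fixes n m :: nat and A B :: "nat \<Rightarrow> nat \<Rightarrow> real"
    and C :: "(nat \<times> nat, nat \<times> nat) dsr_vertex list" and a1 b1 i j :: nat
  assumes "n \<ge> 2"
    and "dsr_cycle (SI2 n) (RI2 n m) (Lbar A) (Lunder B) C"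
    and "hd C = SV (i, j)"
    and "(a1, b1) = (i, j) \<or> (a1, b1) = (j, i)"
  shows "(is_direct a1 b1 C \<longrightarrow>
           walk_parity (Lbar A) (Lunder B) C =
             walk_parity A B (fst (proj_walks a1 b1 C)) * walk_parity A B (snd (proj_walks a1 b1 C)))
       \<and> (\<not> is_direct a1 b1 C \<longrightarrow>
           walk_parity (Lbar A) (Lunder B) C = - walk_parity A B (proj_twisted a1 b1 C))"
proof -
  have w: "dsr_walk (SI2 n) (RI2 n m) (Lbar A) (Lunder B) C" and lC: "last C = SV (i,j)"
    and len1: "walk_len C \<ge> 1"
    using assms(2,3) unfolding dsr_cycle_def by auto
  have ij: "i < j"
  proof -
    from decomp[OF w assms(3) lC] len1 obtain q p'' C'' where C: "C = SV (i,j) # RV q # SV p'' # C''"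
      and ar1: "dsr_arc (SI2 n) (RI2 n m) (Lbar A) (Lunder B) (SV (i,j)) (RV q)"
      by (auto simp: walk_len_def)
    then show ?thesis by (auto simp: SI2_def)
  qed
  obtain V1 V2 where pw: "proj_walks a1 b1 C = (V1, V2)" by fastforce
  have M: "V1 \<noteq> [] \<and> V2 \<noteq> [] \<and> hd V1 = hd [SV a1] \<and> hd V2 = hd [SV b1]
    \<and> ((last V1 = SV (fst (i,j)) \<and> last V2 = SV (snd (i,j))) \<or> (last V1 = SV (snd (i,j)) \<and> last V2 = SV (fst (i,j))))
    \<and> walk_len V1 + walk_len V2 = walk_len [SV a1] + walk_len [SV b1] + walk_len C
    \<and> even (walk_len V1) \<and> even (walk_len V2) \<and> even (walk_len C)
    \<and> walk_sign A B V1 * walk_sign A B V2 = walk_sign A B [SV a1] * walk_sign A B [SV b1]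
        * walk_sign (Lbar A) (Lunder B) C
        * (if (last V1 = SV (fst (i,j))) = (last [SV a1] = SV (fst (i,j))) then 1 else -1)"
    using mainl[OF w assms(3) lC, of "[SV a1]" "[SV b1]" V1 V2] assms(4) pw
    by (auto simp: walk_len_def proj_walks_def)
  have L: "walk_len V1 + walk_len V2 = walk_len C" using M by (simp add: walk_len_def)
  show ?thesis
  proof (intro conjI impI)
    assume "is_direct a1 b1 C"
    then have "last V1 = SV a1" using pw M unfolding is_direct_def by auto
    then have "walk_sign A B V1 * walk_sign A B V2 = walk_sign (Lbar A) (Lunder B) C"
      using M by (auto simp: sign_single)
    then show "walk_parity (Lbar A) (Lunder B) C =
             walk_parity A B (fst (proj_walks a1 b1 C)) * walk_parity A B (snd (proj_walks a1 b1 C))"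
    proof -
      have e: "((-1::real) ^ (walk_len V1 div 2)) * (-1) ^ (walk_len V2 div 2) = (-1) ^ (walk_len C div 2)"
      proof -
        have ev: "even (walk_len V1)" "even (walk_len V2)" using M by auto
        show ?thesis using par_mult[OF ev] L by simp
      qed
      have "walk_parity A B V1 * walk_parity A B V2 =
         (((-1::real) ^ (walk_len V1 div 2)) * (-1) ^ (walk_len V2 div 2)) * (walk_sign A B V1 * walk_sign A B V2)"
        unfolding walk_parity_def by (simp add: algebra_simps)
      then show ?thesis using e pw \<open>walk_sign A B V1 * walk_sign A B V2 = _\<close>
        by (simp add: walk_parity_def)
    qed
  next
    assume "\<not> is_direct a1 b1 C"
    then have "\<not> (last V1 = SV a1 \<and> last V2 = SV b1)" using pw M unfolding is_direct_def by auto
    then have lv: "last V1 = SV b1" "last V2 = SV a1" using M assms(4) by auto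
    then have "walk_sign A B V1 * walk_sign A B V2 = - walk_sign (Lbar A) (Lunder B) C"
      using M assms(4) ij by (auto simp: sign_single)
    moreover have "walk_sign A B (V1 @ tl V2) = walk_sign A B V1 * walk_sign A B V2"
      using M lv by (intro sign_app) auto
    moreover have "walk_len (V1 @ tl V2) = walk_len V1 + walk_len V2"
      using M by (intro len_app) auto
    ultimately show "walk_parity (Lbar A) (Lunder B) C = - walk_parity A B (proj_twisted a1 b1 C)"
      using pw L unfolding proj_twisted_def walk_parity_def by simp
  qed
qed

end
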